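(* Let $\gamma$ be a unit speed line of curvature ($\tau_g\equiv 0$) on a smooth oriented surface $M\subset E^3$, with nowhere-vanishing normal curvature $k_n$, whose position vector always lies in the plane spanned by $\{T,V\}$. Then $\gamma$ is an isophotic curve if and only if $k_n$ is a constant function.
   Context: For a unit speed curve $\gamma$ on an oriented surface $M\subset E^3$, the Darboux frame is $T=\gamma'$, $U$ = unit normal of $M$ along $\gamma$, $V = U\times T$, satisfying $T' = k_g V + k_n U$, $V' = -k_g T + \tau_g U$, $U' = -k_n T - \tau_g V$; here $k_g$, $k_n$, $\tau_g$ are the geodesic curvature, normal curvature and geodesic torsion. The curve $\gamma$ is an isophotic curve if there is a fixed unit vector $d$ and a constant angle $\phi$ with $\langle U, d\rangle = \cos\phi$ along $\gamma$. "Position vector lies in the plane spanned by $\{T,V\}$" means $\gamma(s) = \mu_1(s)T(s) + \mu_2(s)V(s)$ for differentiable functions $\mu_1,\mu_2$. *)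

theory Defs
  imports "HOL-Analysis.Analysis"
begin

text \<open>T = gamma', U is the unit surface normal along gamma, V = U x T.\<close>
definition darboux_frame ::
  "real set \<Rightarrow> (real \<Rightarrow> real^3) \<Rightarrow> (real \<Rightarrow> real^3) \<Rightarrow> (real \<Rightarrow> real^3) \<Rightarrow> (real \<Rightarrow> real^3)
   \<Rightarrow> (real \<Rightarrow> real) \<Rightarrow> (real \<Rightarrow> real) \<Rightarrow> (real \<Rightarrow> real) \<Rightarrow> bool" where
  "darboux_frame I \<gamma> T V U kg kn tg \<longleftrightarrow>
     (\<forall>s\<in>I.
        (\<gamma> has_vector_derivative T s) (at s) \<and>
        norm (T s) = 1 \<and> norm (U s) = 1 \<and> T s \<bullet> U s = 0 \<and>
        V s = cross3 (U s) (T s) \<and>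
        (T has_vector_derivative (kg s *\<^sub>R V s + kn s *\<^sub>R U s)) (at s) \<and>
        (V has_vector_derivative (- kg s *\<^sub>R T s + tg s *\<^sub>R U s)) (at s) \<and>
        (U has_vector_derivative (- kn s *\<^sub>R T s - tg s *\<^sub>R V s)) (at s))"

definition isophotic :: "real set \<Rightarrow> (real \<Rightarrow> real^3) \<Rightarrow> bool" where
  "isophotic I U \<longleftrightarrow> (\<exists>d \<phi>. norm d = 1 \<and> (\<forall>s\<in>I. U s \<bullet> d = cos \<phi>))"

end

theory Submission imports Defs begin

lemma inner_vd:
  fixes f g :: "real \<Rightarrow> real^3"
  assumes "(f has_vector_derivative f') (at s)" "(g has_vector_derivative g') (at s)"
  shows "((\<lambda>t. f t \<bullet> g t) has_real_derivative (f' \<bullet> g s + f s \<bullet> g')) (at s)"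
proof -
  have "((\<lambda>t. f t \<bullet> g t) has_derivative (\<lambda>h. f s \<bullet> (h *\<^sub>R g') + (h *\<^sub>R f') \<bullet> g s)) (at s)"
    using has_derivative_inner[OF assms[unfolded has_vector_derivative_def]] by simp
  then show ?thesis unfolding has_field_derivative_def
    by (rule has_derivative_eq_rhs) (auto simp: algebra_simps inner_commute)
qed

lemma const_on:
  fixes f :: "real \<Rightarrow> real"
  assumes "\<And>s. s \<in> {a<..<b} \<Longrightarrow> (f has_real_derivative 0) (at s)"
  shows "\<exists>c. \<forall>s\<in>{a<..<b}. f s = c"
  using assms by (intro has_field_derivative_zero_constant) (auto intro: has_field_derivative_at_within)

lemma deriv_of_zero:
  fixes f :: "real \<Rightarrow> real"
  assumes "(f has_real_derivative D) (at s)" "s \<in> {a<..<b}" "\<And>s. s \<in> {a<..<b} \<Longrightarrow> f s = 0"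
  shows "D = 0"
proof -
  have "((\<lambda>_. 0) has_real_derivative D) (at s)"
    by (rule has_field_derivative_transform_within_open[OF assms(1) _ assms(2)]) (use assms in auto)
  then show ?thesis using DERIV_const DERIV_unique by blast
qed

theorem corollary4p2:
  fixes a b :: real
    and \<gamma> T V U :: "real \<Rightarrow> real^3"
    and kg kn tg \<mu>1 \<mu>2 :: "real \<Rightarrow> real"
  assumes "a < b"
    and frame: "darboux_frame {a<..<b} \<gamma> T V U kg kn tg"
    and line_of_curvature: "\<forall>s\<in>{a<..<b}. tg s = 0"
    and kn_nonzero: "\<forall>s\<in>{a<..<b}. kn s \<noteq> 0"
    and mu_diff: "\<forall>s\<in>{a<..<b}. \<mu>1 differentiable (at s) \<and> \<mu>2 differentiable (at s)"
    and position: "\<forall>s\<in>{a<..<b}. \<gamma> s = \<mu>1 s *\<^sub>R T s + \<mu>2 s *\<^sub>R V s"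
  shows "isophotic {a<..<b} U \<longleftrightarrow> (\<exists>c. \<forall>s\<in>{a<..<b}. kn s = c)"
proof -
  define I where "I = {a<..<b}"
  have F: "(\<gamma> has_vector_derivative T s) (at s) \<and>
        norm (T s) = 1 \<and> norm (U s) = 1 \<and> T s \<bullet> U s = 0 \<and>
        V s = cross3 (U s) (T s) \<and>
        (T has_vector_derivative (kg s *\<^sub>R V s + kn s *\<^sub>R U s)) (at s) \<and>
        (V has_vector_derivative (- kg s *\<^sub>R T s)) (at s) \<and>
        (U has_vector_derivative (- kn s *\<^sub>R T s)) (at s)" if s: "s \<in> I" for s
  proof -
    have t0: "tg s = 0" using line_of_curvature s by (simp add: I_def)
    have H: "(\<gamma> has_vector_derivative T s) (at s) \<and>
        norm (T s) = 1 \<and> norm (U s) = 1 \<and> T s \<bullet> U s = 0 \<and>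
        V s = cross3 (U s) (T s) \<and>
        (T has_vector_derivative (kg s *\<^sub>R V s + kn s *\<^sub>R U s)) (at s) \<and>
        (V has_vector_derivative (- kg s *\<^sub>R T s + tg s *\<^sub>R U s)) (at s) \<and>
        (U has_vector_derivative (- kn s *\<^sub>R T s - tg s *\<^sub>R V s)) (at s)"
      using frame s unfolding darboux_frame_def I_def by blast
    show ?thesis using H[unfolded t0 scaleR_zero_left add_0_right diff_0_right] by blast
  qed
  have TT: "T s \<bullet> T s = 1" and UU: "U s \<bullet> U s = 1" and TU: "T s \<bullet> U s = 0"
    and UT: "U s \<bullet> T s = 0"
    and VT: "V s \<bullet> T s = 0" and TV: "T s \<bullet> V s = 0"
    and VU: "V s \<bullet> U s = 0" and UV: "U s \<bullet> V s = 0" and VV: "V s \<bullet> V s = 1"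
    if "s \<in> I" for s
  proof -
    from F[OF that] have n: "norm (T s) = 1" "norm (U s) = 1" "T s \<bullet> U s = 0"
      and v: "V s = cross3 (U s) (T s)" by auto
    show "T s \<bullet> T s = 1" "U s \<bullet> U s = 1" "T s \<bullet> U s = 0" "U s \<bullet> T s = 0"
      using n by (auto simp: norm_eq_1 inner_commute)
    show "V s \<bullet> T s = 0" "T s \<bullet> V s = 0" "V s \<bullet> U s = 0" "U s \<bullet> V s = 0"
      using v dot_cross_self by (auto simp: inner_commute)
    have "(norm (V s))\<^sup>2 + 0 = 1" using norm_cross_dot[of "U s" "T s"] n v by (simp add: inner_commute)
    then have "norm (V s) = 1" using norm_ge_zero[of "V s"] by (auto simp add: power2_eq_1_iff)
    then show "V s \<bullet> V s = 1" by (simp add: norm_eq_1)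
  qed
  have gU: "\<gamma> s \<bullet> U s = 0" and gT: "\<gamma> s \<bullet> T s = \<mu>1 s" and gV: "\<gamma> s \<bullet> V s = \<mu>2 s"
    if "s \<in> I" for s
    using position that TT[OF that] TU[OF that] VT[OF that] VU[OF that] VV[OF that]
      UT[OF that] TV[OF that] UV[OF that]
    by (auto simp: I_def inner_add_left)
  have mu1: "\<mu>1 s = 0" if s: "s \<in> I" for s
  proof -
    have "((\<lambda>t. \<gamma> t \<bullet> U t) has_real_derivative (T s \<bullet> U s + \<gamma> s \<bullet> (- kn s *\<^sub>R T s))) (at s)"
      using F[OF s] by (intro inner_vd) auto
    then have "T s \<bullet> U s + \<gamma> s \<bullet> (- kn s *\<^sub>R T s) = 0"
      by (rule deriv_of_zero[where a=a and b=b]) (use gU s in \<open>auto simp: I_def\<close>)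
    then have "kn s * \<mu>1 s = 0" using TU[OF s] gT[OF s] by simp
    then show ?thesis using kn_nonzero s by (auto simp: I_def)
  qed
  have kgmu: "kg s * \<mu>2 s = -1" if s: "s \<in> I" for s
  proof -
    have "((\<lambda>t. \<gamma> t \<bullet> T t) has_real_derivative (T s \<bullet> T s + \<gamma> s \<bullet> (kg s *\<^sub>R V s + kn s *\<^sub>R U s))) (at s)"
      using F[OF s] by (intro inner_vd) auto
    then have "T s \<bullet> T s + \<gamma> s \<bullet> (kg s *\<^sub>R V s + kn s *\<^sub>R U s) = 0"
      by (rule deriv_of_zero[where a=a and b=b]) (use gT mu1 s in \<open>auto simp: I_def\<close>)
    then show ?thesis using TT[OF s] gV[OF s] gU[OF s] by (simp add: inner_add_right)
  qed
  have "\<exists>m. \<forall>s\<in>I. \<mu>2 s = m"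
    unfolding I_def
  proof (rule const_on)
    fix s assume s0: "s \<in> {a<..<b}"
    then have s: "s \<in> I" by (simp add: I_def)
    have d: "(\<mu>2 has_real_derivative deriv \<mu>2 s) (at s)"
      using mu_diff s0 DERIV_deriv_iff_real_differentiable by blast
    have "((\<lambda>t. \<gamma> t \<bullet> V t) has_real_derivative (T s \<bullet> V s + \<gamma> s \<bullet> (- kg s *\<^sub>R T s))) (at s)"
      using F[OF s] by (intro inner_vd) auto
    from DERIV_diff[OF d this]
    have "deriv \<mu>2 s - (T s \<bullet> V s + \<gamma> s \<bullet> (- kg s *\<^sub>R T s)) = 0"
      by (rule deriv_of_zero[where a=a and b=b]) (use gV s0 in \<open>auto simp: I_def\<close>)
    then have "deriv \<mu>2 s = 0" using TV[OF s] gT[OF s] mu1[OF s] by simp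
    then show "(\<mu>2 has_real_derivative 0) (at s)" using d by simp
  qed
  then obtain m where m: "\<And>s. s \<in> I \<Longrightarrow> \<mu>2 s = m" by blast
  define k where "k = - 1 / m"
  have mnz: "m \<noteq> 0" and kg: "\<And>s. s \<in> I \<Longrightarrow> kg s = k"
  proof -
    have s0: "(a+b)/2 \<in> I" using \<open>a < b\<close> by (simp add: I_def)
    show "m \<noteq> 0" using kgmu[OF s0] m[OF s0] by auto
    fix s assume s: "s \<in> I"
    show "kg s = k" using kgmu[OF s] m[OF s] \<open>m \<noteq> 0\<close> by (simp add: k_def field_simps)
  qed
  have knz: "k \<noteq> 0" using mnz by (simp add: k_def)
  have s0: "(a+b)/2 \<in> I" using \<open>a < b\<close> by (simp add: I_def)
  show ?thesis
  proof
    assume "isophotic {a<..<b} U"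
    then obtain d \<phi> where d1: "norm d = 1" and Ud: "\<And>s. s \<in> I \<Longrightarrow> U s \<bullet> d = cos \<phi>"
      unfolding isophotic_def I_def by blast
    have dc: "((\<lambda>_. d) has_vector_derivative 0) (at s)" for s by (rule has_vector_derivative_const)
    have Td: "T s \<bullet> d = 0" if s: "s \<in> I" for s
    proof -
      have "((\<lambda>t. U t \<bullet> d) has_real_derivative ((- kn s *\<^sub>R T s) \<bullet> d + U s \<bullet> 0)) (at s)"
        using F[OF s] dc by (intro inner_vd) auto
      from DERIV_diff[OF this DERIV_const[of "cos \<phi>"]]
      have "(- kn s *\<^sub>R T s) \<bullet> d + U s \<bullet> 0 - 0 = 0"
        by (rule deriv_of_zero[where a=a and b=b]) (use Ud s in \<open>auto simp: I_def\<close>)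
      then have "kn s * (T s \<bullet> d) = 0" by simp
      then show ?thesis using kn_nonzero s by (auto simp: I_def)
    qed
    have "\<exists>v. \<forall>s\<in>I. V s \<bullet> d = v"
      unfolding I_def
    proof (rule const_on)
      fix s assume "s \<in> {a<..<b}"
      then have s: "s \<in> I" by (simp add: I_def)
      have "((\<lambda>t. V t \<bullet> d) has_real_derivative ((- kg s *\<^sub>R T s) \<bullet> d + V s \<bullet> 0)) (at s)"
        using F[OF s] dc by (intro inner_vd) auto
      then show "((\<lambda>t. V t \<bullet> d) has_real_derivative 0) (at s)" using Td[OF s] by simp
    qed
    then obtain v where Vd: "\<And>s. s \<in> I \<Longrightarrow> V s \<bullet> d = v" by blast
    have key: "k * v + kn s * cos \<phi> = 0" if s: "s \<in> I" for s
    proof -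
      have "((\<lambda>t. T t \<bullet> d) has_real_derivative ((kg s *\<^sub>R V s + kn s *\<^sub>R U s) \<bullet> d + T s \<bullet> 0)) (at s)"
        using F[OF s] dc by (intro inner_vd) auto
      then have "(kg s *\<^sub>R V s + kn s *\<^sub>R U s) \<bullet> d + T s \<bullet> 0 = 0"
        by (rule deriv_of_zero[where a=a and b=b]) (use Td s in \<open>auto simp: I_def\<close>)
      then show ?thesis using kg[OF s] Vd[OF s] Ud[OF s] by (simp add: inner_add_left)
    qed
    show "\<exists>c. \<forall>s\<in>{a<..<b}. kn s = c"
    proof (cases "cos \<phi> = 0")
      case True
      then have "v = 0" using key[OF s0] knz by simp
      have v0: "V ((a+b)/2) = cross3 (U ((a+b)/2)) (T ((a+b)/2))" using F[OF s0] by auto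
      have "cross3 (V ((a+b)/2)) d = 0"
        unfolding v0 cross_skew[of _ d] Lagrange
        using Td[OF s0] Ud[OF s0] True by (simp add: inner_commute)
      then have "0 + (V ((a+b)/2) \<bullet> d)\<^sup>2 = (norm (V ((a+b)/2)) * norm d)\<^sup>2"
        using norm_cross_dot[of "V ((a+b)/2)" d] by simp
      moreover have "norm (V ((a+b)/2)) = 1" using VV[OF s0] by (simp add: norm_eq_1)
      ultimately show ?thesis using Vd[OF s0] \<open>v = 0\<close> d1 by simp
    next
      case False
      show ?thesis
      proof (intro exI ballI)
        fix s assume "s \<in> {a<..<b}"
        then have "k * v + kn s * cos \<phi> = 0" using key by (simp add: I_def)
        then have "kn s * cos \<phi> = - k * v" by linarith
        then show "kn s = - k * v / cos \<phi>" using False by (simp add: field_simps)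
      qed
    qed
  next
    assume "\<exists>c. \<forall>s\<in>{a<..<b}. kn s = c"
    then obtain c where kn: "\<And>s. s \<in> I \<Longrightarrow> kn s = c" by (auto simp: I_def)
    define E where "E = (\<lambda>t. k *\<^sub>R U t - c *\<^sub>R V t)"
    obtain e where e: "\<And>s. s \<in> I \<Longrightarrow> E s = e"
    proof (rule has_vector_derivative_zero_constant[of I E])
      show "convex I" by (simp add: I_def)
      fix s assume s: "s \<in> I"
      have "(E has_vector_derivative (k *\<^sub>R (- kn s *\<^sub>R T s) + 0 *\<^sub>R U s - (c *\<^sub>R (- kg s *\<^sub>R T s) + 0 *\<^sub>R V s))) (at s)"
        unfolding E_def using F[OF s]
        by (intro has_vector_derivative_diff has_vector_derivative_scaleR DERIV_const) auto
      then have "(E has_vector_derivative 0) (at s)" using kn[OF s] kg[OF s] by (simp add: mult.commute)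
      then show "(E has_vector_derivative 0) (at s within I)"
        using has_vector_derivative_at_within by blast
    qed auto
    have Ue: "U s \<bullet> e = k" if s: "s \<in> I" for s
      using e[OF s, symmetric] UU[OF s] UV[OF s] by (simp add: E_def inner_diff_right)
    have enz: "e \<noteq> 0" using Ue[OF s0] knz by auto
    have "\<bar>U ((a+b)/2) \<bullet> e\<bar> \<le> norm (U ((a+b)/2)) * norm e" by (rule Cauchy_Schwarz_ineq2)
    then have kle: "\<bar>k\<bar> \<le> norm e" using Ue[OF s0] UU[OF s0] by (simp add: norm_eq_1[symmetric])
    have ne: "norm e > 0" using enz by simp
    have b1: "-1 \<le> k / norm e" "k / norm e \<le> 1" using kle ne by (auto simp: field_simps abs_le_iff)
    show "isophotic {a<..<b} U" unfolding isophotic_def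
    proof (intro exI conjI ballI)
      show "norm (e /\<^sub>R norm e) = 1" using ne by simp
      fix s assume "s \<in> {a<..<b}"
      then have s: "s \<in> I" by (simp add: I_def)
      show "U s \<bullet> (e /\<^sub>R norm e) = cos (arccos (k / norm e))"
        using Ue[OF s] b1 by (simp add: cos_arccos divide_inverse mult.commute)
    qed
  qed
qed

end
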